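(* Let $\mathcal{R}=\{z\in\mathbb{C}:\Re(z)>0\}$ and let $\Phi:\mathcal{R}\to\mathbb{C}$ be analytic and satisfy: (a) for all $0<a<b<\infty$, $\lim_{y\to\pm\infty} e^{-\pi|y|}\int_a^b\left|\frac{\Phi(x+iy)}{x+iy}\right|\mathrm{d}x=0$; (b) for every $\eta>0$, $\sup_{x\ge\eta}\int_{-\infty}^\infty\left|\frac{\Phi(x+iy)}{x+iy}\right|e^{-\pi|y|}\,\mathrm{d}y<\infty$; (c) $\lim_{x\to\infty}\int_{-\infty}^\infty\left|\frac{\Phi(x+iy)}{x+iy}\right|e^{-\pi|y|}\,\mathrm{d}y=0$. For $\xi>0$ let $\mathcal{A}(\xi,\Phi;z)=\frac{\Phi(\xi)}{z-\xi}-\frac{\Phi(\xi)}{z+\xi}$. Then the sequence of entire functions $$\left(\frac{\cos\pi z}{\pi}\right)\sum_{n=1}^N(-1)^n\mathcal{A}(n-\tfrac12,\Phi;z),\qquad N=1,2,3,\dots,$$ converges uniformly on compact subsets of $\mathbb{C}$ as $N\to\infty$; hence $\mathcal{K}(\Phi,z)=\lim_{N\to\infty}\left(\frac{\cos\pi z}{\pi}\right)\sum_{n=1}^N(-1)^n\mathcal{A}(n-\tfrac12,\Phi;z)$ is an entire function. *)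

theory Defs
  imports "HOL-Analysis.Analysis"
begin

definition right_half_plane :: "complex set" where
  "right_half_plane = {z. Re z > 0}"

definition calA :: "real \<Rightarrow> (complex \<Rightarrow> complex) \<Rightarrow> complex \<Rightarrow> complex" where
  "calA \<xi> \<Phi> z = \<Phi> (complex_of_real \<xi>) / (z - complex_of_real \<xi>)
                 - \<Phi> (complex_of_real \<xi>) / (z + complex_of_real \<xi>)"

text \<open>The N-th partial expression (cos pi z / pi) * sum_{n=1}^N (-1)^n A(n - 1/2, Phi; z),
  as a formula; it has removable singularities at the half-integers.\<close>
definition partial_K :: "(complex \<Rightarrow> complex) \<Rightarrow> nat \<Rightarrow> complex \<Rightarrow> complex" where
  "partial_K \<Phi> N z = (cos (complex_of_real pi * z) / complex_of_real pi) *
      (\<Sum>n = 1..N. (-1) ^ n * calA (real n - 1/2) \<Phi> z)"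

definition vert_int :: "(complex \<Rightarrow> complex) \<Rightarrow> real \<Rightarrow> ennreal" where
  "vert_int \<Phi> x = (\<integral>\<^sup>+ y. ennreal (norm (\<Phi> (Complex x y) / Complex x y) * exp (- pi * \<bar>y\<bar>)) \<partial>lborel)"

definition horiz_int :: "(complex \<Rightarrow> complex) \<Rightarrow> real \<Rightarrow> real \<Rightarrow> real \<Rightarrow> ennreal" where
  "horiz_int \<Phi> a b y = (\<integral>\<^sup>+ x \<in> {a..b}. ennreal (norm (\<Phi> (Complex x y) / Complex x y)) \<partial>lborel)"

end

theory Submission
  imports Defs "HOL-Complex_Analysis.Complex_Analysis"
begin

definition xi :: "nat \<Rightarrow> complex" where "xi n = complex_of_real (real n - 1/2)"
definition gg :: "(complex \<Rightarrow> complex) \<Rightarrow> complex \<Rightarrow> complex" where "gg \<Phi> w = \<Phi> w / w"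
definition hh :: "(complex \<Rightarrow> complex) \<Rightarrow> complex \<Rightarrow> complex" where
  "hh \<Phi> w = gg \<Phi> w / cos (complex_of_real pi * w)"

lemma exp_abs_le: "exp \<bar>u::real\<bar> \<le> exp u + exp (-u)"
  using exp_gt_zero[of u] exp_gt_zero[of "-u"] by (auto simp: abs_if)

lemma aux_sq: "(a::real) * b = 1 \<Longrightarrow> 1 + (a - b)^2/4 = ((a + b)/2)^2"
  by (simp add: power2_eq_square field_simps)

lemma cos_vert:
  fixes m :: nat
  shows "exp (pi * \<bar>y\<bar>) / 2 \<le> norm (cos (complex_of_real pi * Complex (real m) y))"
proof -
  let ?z = "complex_of_real pi * Complex (real m) y"
  have re: "Re ?z = real m * pi" and im: "Im ?z = pi * y" by auto
  have c: "cos (real m * pi) ^ 2 = 1" by (simp add: cos_npi power2_eq_square minus_one_power_iff)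
  have e: "inverse (exp (pi*y)) = exp (-(pi*y))" by (simp add: exp_minus)
  have "norm (cos ?z) ^ 2 = 1 + (exp (pi*y) - exp (-(pi*y)))^2 / 4"
    using norm_cos_squared[of ?z] by (simp only: re im c e)
  also have "\<dots> = ((exp (pi*y) + exp (-(pi*y))) / 2)^2"
    by (rule aux_sq) (simp add: exp_minus)
  finally have sq: "norm (cos ?z) ^ 2 = ((exp (pi*y) + exp (-(pi*y))) / 2)^2" .
  have "norm (cos ?z) = (exp (pi*y) + exp (-(pi*y))) / 2"
    using sq by (rule power2_eq_imp_eq) (auto intro: add_nonneg_nonneg)
  moreover have "exp (pi*\<bar>y\<bar>) \<le> exp (pi*y) + exp (-(pi*y))"
    using exp_abs_le[of "pi*y"] by (simp add: abs_mult)
  ultimately show ?thesis by simp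
qed

lemma exp_twice: "exp (2*(u::real)) = exp u * exp u" 
proof -
  have "exp (2*u) = exp (u+u)" by (rule arg_cong[where f=exp]) simp
  also have "\<dots> = exp u * exp u" by (rule exp_add)
  finally show ?thesis .
qed

lemma cos_horiz:
  assumes "1 \<le> \<bar>y\<bar>"
  shows "exp (pi * \<bar>y\<bar>) / 4 \<le> norm (cos (complex_of_real pi * Complex x y))"
proof -
  let ?z = "complex_of_real pi * Complex x y"
  have re: "Re ?z = pi * x" and im: "Im ?z = pi * y" by auto
  have e: "inverse (exp (pi*y)) = exp (-(pi*y))" by (simp add: exp_minus)
  have "(exp (pi*y) - exp (-(pi*y)))^2 / 4 \<le> norm (cos ?z) ^ 2"
    using norm_cos_squared[of ?z] unfolding re im e by simp
  moreover have "(exp (pi * \<bar>y\<bar>) / 4)^2 \<le> (exp (pi*y) - exp (-(pi*y)))^2 / 4"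
  proof -
    define u where "u = pi * \<bar>y\<bar>"
    have "pi * 1 \<le> pi * \<bar>y\<bar>" by (rule mult_left_mono) (use assms in auto)
    hence s1: "u \<ge> 1" using pi_gt3 unfolding u_def by linarith
    have "exp (2*u) \<ge> 2" using exp_ge_add_one_self[of "2*u"] s1 by linarith
    moreover have "exp (2*u) = exp u * exp u" by (rule exp_twice)
    ultimately have ee: "exp u * exp u \<ge> 2" by simp
    have inv: "exp (-u) * exp u = 1" by (simp add: exp_minus)
    have "exp (-u) * 2 \<le> exp (-u) * (exp u * exp u)"
      using ee by (intro mult_left_mono) auto
    also have "\<dots> = (exp (-u) * exp u) * exp u" by (simp only: mult.assoc)
    also have "\<dots> = exp u" by (simp only: inv mult_1)
    finally have le: "exp (-u) \<le> exp u / 2" by simp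
    have "(exp (pi*y) - exp (-(pi*y)))^2 = (exp u - exp (-u))^2"
    proof (cases "y \<ge> 0")
      case True then show ?thesis by (simp add: u_def)
    next
      case False then have "u = - (pi*y)" by (simp add: u_def)
      then show ?thesis by (simp add: power2_commute)
    qed
    moreover have "exp u / 2 \<le> exp u - exp (-u)" using le by simp
    hence "(exp u / 2)^2 \<le> (exp u - exp (-u))^2"
      by (intro power_mono) auto
    ultimately have "(exp u / 2)^2 \<le> (exp (pi*y) - exp (-(pi*y)))^2" by simp
    then show ?thesis unfolding u_def by (simp add: power_divide)
  qed
  ultimately have "(exp (pi * \<bar>y\<bar>) / 4)^2 \<le> norm (cos ?z) ^ 2" by linarith
  thus ?thesis by (rule power2_le_imp_le) simp
qed

lemma cos_zero_half:
  assumes "cos (complex_of_real pi * w) = 0"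
  shows "\<exists>k::int. w = of_real (of_int k + 1/2)"
proof -
  obtain n :: int where "complex_of_real pi * w = of_real (n * pi) + of_real pi / 2"
    using assms cos_eq_0 by blast
  hence "complex_of_real pi * w = complex_of_real pi * of_real (of_int n + 1/2)"
    by (simp add: algebra_simps)
  hence "w = of_real (of_int n + 1/2)" by simp
  thus ?thesis by blast
qed

lemma cos_xi: "cos (complex_of_real pi * xi n) = 0"
proof -
  have "complex_of_real pi * xi n = of_real (of_int (int n - 1) * pi) + of_real pi / 2"
    by (simp add: xi_def algebra_simps)
  thus ?thesis using cos_eq_0 by blast
qed

lemma cos_mxi: "cos (complex_of_real pi * (- xi n)) = 0"
  using cos_xi[of n] by simp

lemma sin_xi: "sin (complex_of_real pi * xi n) = - ((-1)^n)"
proof -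
  have "complex_of_real pi * xi n = of_real (real n * pi - pi/2)"
    by (simp add: xi_def algebra_simps)
  moreover have "sin (real n * pi - pi/2) = - ((-1)^n)"
    by (simp add: sin_diff cos_npi)
  ultimately have "sin (complex_of_real pi * xi n) = complex_of_real (sin (real n * pi - pi/2))"
    by (simp only: sin_of_real)
  also have "\<dots> = - ((-1)^n)" by (simp add: sin_diff cos_npi)
  finally show ?thesis .
qed


lemma rhp_Complex: "x > 0 \<Longrightarrow> Complex x y \<in> right_half_plane"
  by (simp add: right_half_plane_def)

lemma open_rhp: "open right_half_plane"
  unfolding right_half_plane_def by (simp add: open_halfspace_Re_gt)

lemma gg_holo: "\<Phi> holomorphic_on right_half_plane \<Longrightarrow> gg \<Phi> holomorphic_on right_half_plane"
  unfolding gg_def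
  by (intro holomorphic_intros) (auto simp: right_half_plane_def)

lemma cos_zero_near:
  assumes "cos (complex_of_real pi * w) = 0" "dist w (xi n) < 1/2" "n \<ge> 1"
  shows "w = xi n"
proof -
  obtain k :: int where k: "w = of_real (of_int k + 1/2)" using cos_zero_half[OF assms(1)] by blast
  have "w - xi n = complex_of_real ((of_int k + 1/2) - (real n - 1/2))"
    unfolding k xi_def by simp
  hence "dist w (xi n) = \<bar>(of_int k + 1/2) - (real n - 1/2)\<bar>"
    by (simp only: dist_norm norm_of_real)
  with assms(2) have "\<bar>of_int k - real n + 1\<bar> < 1/2" by arith
  hence "\<bar>real_of_int (k - int n + 1)\<bar> < 1/2" by simp
  hence "real_of_int \<bar>k - int n + 1\<bar> < 1" by linarith
  hence "\<bar>k - int n + 1\<bar> < 1" by linarith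
  hence "k = int n - 1" by arith
  hence "of_int k = real n - 1" by simp
  thus ?thesis unfolding k xi_def by simp
qed

lemma residue_hh:
  assumes holo: "\<Phi> holomorphic_on right_half_plane" and n: "n \<ge> 1"
  shows "residue (hh \<Phi>) (xi n) = (-1)^n * gg \<Phi> (xi n) / pi"
proof -
  let ?s = "ball (xi n) (1/2)"
  have sub: "?s \<subseteq> right_half_plane"
  proof
    fix w assume "w \<in> ?s"
    hence "\<bar>Re w - (real n - 1/2)\<bar> < 1/2"
      using abs_Re_le_cmod[of "w - xi n"] by (simp add: xi_def dist_norm norm_minus_commute)
    moreover have "real n \<ge> 1" using n by simp
    ultimately have "Re w > 0" by arith
    thus "w \<in> right_half_plane" by (simp add: right_half_plane_def)
  qed
  have xs: "xi n \<in> ?s" by simp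
  have cnz: "cos (complex_of_real pi * w) \<noteq> 0" if "w \<in> ?s - {xi n}" for w
    using cos_zero_near[of w n] that n by (auto simp: dist_commute)
  have gh: "gg \<Phi> holomorphic_on ?s" using gg_holo[OF holo] sub by (rule holomorphic_on_subset)
  have holo_s: "hh \<Phi> holomorphic_on (?s - {xi n})"
    unfolding hh_def using cnz
    by (intro holomorphic_intros holomorphic_on_subset[OF gh]) auto
  define D where "D = - sin (complex_of_real pi * xi n) * complex_of_real pi"
  have D: "D = complex_of_real pi * (-1)^n" unfolding D_def sin_xi by simp
  have Dnz: "D \<noteq> 0" unfolding D by simp
  have der: "((\<lambda>w. cos (complex_of_real pi * w)) has_field_derivative D) (at (xi n))"
    unfolding D_def by (auto intro!: derivative_eq_intros)
  hence "((\<lambda>w. (cos (complex_of_real pi * w) - cos (complex_of_real pi * xi n)) / (w - xi n)) \<longlongrightarrow> D) (at (xi n))"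
    by (simp add: has_field_derivative_iff)
  hence l1: "((\<lambda>w. cos (complex_of_real pi * w) / (w - xi n)) \<longlongrightarrow> D) (at (xi n))"
    by (simp add: cos_xi)
  have l2: "((\<lambda>w. inverse (cos (complex_of_real pi * w) / (w - xi n))) \<longlongrightarrow> inverse D) (at (xi n))"
    using l1 Dnz by (rule tendsto_inverse)
  have "continuous_on ?s (gg \<Phi>)" using gh by (rule holomorphic_on_imp_continuous_on)
  hence "isCont (gg \<Phi>) (xi n)" using xs continuous_on_eq_continuous_at[OF open_ball] by blast
  hence l3: "(gg \<Phi> \<longlongrightarrow> gg \<Phi> (xi n)) (at (xi n))" by (simp add: isCont_def)
  have "((\<lambda>w. gg \<Phi> w * inverse (cos (complex_of_real pi * w) / (w - xi n))) \<longlongrightarrow> gg \<Phi> (xi n) * inverse D) (at (xi n))"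
    by (rule tendsto_mult[OF l3 l2])
  moreover have "gg \<Phi> w * inverse (cos (complex_of_real pi * w) / (w - xi n)) = hh \<Phi> w * (w - xi n)" for w
    unfolding hh_def by (simp add: field_simps)
  ultimately have lim: "((\<lambda>w. hh \<Phi> w * (w - xi n)) \<longlongrightarrow> gg \<Phi> (xi n) * inverse D) (at (xi n))" by simp
  have "residue (hh \<Phi>) (xi n) = gg \<Phi> (xi n) * inverse D"
    by (rule residue_simple'[OF open_ball xs holo_s lim])
  also have "\<dots> = (-1)^n * gg \<Phi> (xi n) / pi"
  proof -
    have inv: "inverse ((-1::complex)^n) = (-1)^n" by (induct n) auto
    show ?thesis unfolding D by (simp add: inverse_mult_distrib inv divide_inverse ac_simps)
  qed
  finally show ?thesis .
qed


lemma hh_holo: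
  assumes holo: "\<Phi> holomorphic_on right_half_plane" and A: "A \<subseteq> right_half_plane"
    and c: "\<And>w. w \<in> A \<Longrightarrow> cos (complex_of_real pi * w) \<noteq> 0"
  shows "hh \<Phi> holomorphic_on A"
  unfolding hh_def using c
  by (intro holomorphic_intros holomorphic_on_subset[OF gg_holo[OF holo] A]) auto

lemma int_gt_aux: "real_of_int j - 1 < real_of_int k \<Longrightarrow> j \<le> k"
proof -
  assume "real_of_int j - 1 < real_of_int k"
  hence "real_of_int (j - 1) < real_of_int k" by simp
  hence "j - 1 < k" by (simp only: of_int_less_iff)
  thus "j \<le> k" by simp
qed

lemma xi_inj: "inj xi"
  unfolding xi_def by (rule injI) simp

lemma xi_ne_nat: "xi n \<noteq> Complex (real m) y"
proof
  assume "xi n = Complex (real m) y"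
  hence "real n - 1/2 = real m" unfolding xi_def by (simp add: complex_eq_iff)
  thus False by (cases "n \<le> m") auto
qed

lemma rect_CI:
  assumes holo: "\<Phi> holomorphic_on right_half_plane" and M: "1 \<le> M" "M < M'" and T: "T > 0"
  shows "contour_integral (rectpath (Complex (real M) (-T)) (Complex (real M') T)) (hh \<Phi>)
           = 2 * \<i> * (\<Sum>n\<in>{M<..M'}. (-1)^n * gg \<Phi> (xi n))"
proof -
  define a1 where "a1 = Complex (real M) (-T)"
  define a3 where "a3 = Complex (real M') T"
  define S where "S = box (Complex (real M - 1/4) (-T-1)) (Complex (real M' + 1/4) (T+1))"
  define pts where "pts = xi ` {M<..M'}"
  have le13: "Re a1 \<le> Re a3" "Im a1 \<le> Im a3" using M T by (auto simp: a1_def a3_def)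
  have S_rhp: "S \<subseteq> right_half_plane"
    using M by (auto simp: S_def in_box_complex_iff right_half_plane_def)
  have cos_nz: "cos (complex_of_real pi * w) \<noteq> 0" if w: "w \<in> S - pts" for w
  proof
    assume "cos (complex_of_real pi * w) = 0"
    then obtain k :: int where k: "w = of_real (of_int k + 1/2)" using cos_zero_half by blast
    have "real M - 1/4 < of_int k + 1/2" "of_int k + 1/2 < real M' + 1/4"
      using w unfolding k S_def by (auto simp: in_box_complex_iff)
    hence "real_of_int (int M) - 1 < of_int k" "real_of_int k - 1 < real_of_int (int M' - 1)" by auto
    hence k1: "int M \<le> k" and k2: "k \<le> int M' - 1" by (auto dest!: int_gt_aux)
    have "w = xi (nat k + 1)" unfolding k xi_def using k1 by simp
    moreover have "nat k + 1 \<in> {M<..M'}" using k1 k2 by auto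
    ultimately show False using w unfolding pts_def by auto
  qed
  have holoS: "hh \<Phi> holomorphic_on S - pts"
    by (rule hh_holo[OF holo]) (use S_rhp cos_nz in auto)
  have pimg: "path_image (rectpath a1 a3) \<subseteq> S - pts"
  proof
    fix z assume z: "z \<in> path_image (rectpath a1 a3)"
    hence z': "(Re z = real M \<or> Re z = real M') \<and> Im z \<in> {-T..T} \<or> (Im z = -T \<or> Im z = T) \<and> Re z \<in> {real M..real M'}"
      using le13 by (auto simp: path_image_rectpath a1_def a3_def)
    moreover have "real M < real M'" using M by simp
    ultimately have "z \<in> S" using T by (auto simp: S_def in_box_complex_iff)
    moreover have "z \<notin> pts"
    proof
      assume "z \<in> pts"
      then obtain n where zn: "z = xi n" unfolding pts_def by auto
      have "Im z = 0" unfolding zn xi_def by simp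
      hence "Re z = real M \<or> Re z = real M'" using z' T by auto
      thus False using xi_ne_nat[of n M 0] xi_ne_nat[of n M' 0] unfolding zn
        by (auto simp: complex_eq_iff xi_def)
    qed
    ultimately show "z \<in> S - pts" by simp
  qed
  have wout: "\<forall>z. z \<notin> S \<longrightarrow> winding_number (rectpath a1 a3) z = 0"
  proof (intro allI impI)
    fix z assume "z \<notin> S"
    hence "z \<notin> cbox a1 a3" using M T
      by (auto simp: S_def a1_def a3_def in_box_complex_iff in_cbox_complex_iff)
    thus "winding_number (rectpath a1 a3) z = 0"
      using le13 by (intro winding_number_rectpath_outside) auto
  qed
  have "contour_integral (rectpath a1 a3) (hh \<Phi>) =
         2 * pi * \<i> * (\<Sum>p\<in>pts. winding_number (rectpath a1 a3) p * residue (hh \<Phi>) p)"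
    by (rule Residue_theorem[OF _ _ _ holoS _ _ pimg wout]) (auto simp: S_def pts_def intro: convex_connected)
  also have "(\<Sum>p\<in>pts. winding_number (rectpath a1 a3) p * residue (hh \<Phi>) p)
      = (\<Sum>n\<in>{M<..M'}. winding_number (rectpath a1 a3) (xi n) * residue (hh \<Phi>) (xi n))"
    unfolding pts_def by (rule sum.reindex[unfolded comp_def]) (use xi_inj inj_on_subset in blast)
  also have "\<dots> = (\<Sum>n\<in>{M<..M'}. (-1)^n * gg \<Phi> (xi n) / pi)"
  proof (rule sum.cong[OF refl])
    fix n assume n: "n \<in> {M<..M'}"
    have "xi n \<in> box a1 a3" using n T by (auto simp: a1_def a3_def xi_def in_box_complex_iff)
    hence "winding_number (rectpath a1 a3) (xi n) = 1" by (rule winding_number_rectpath)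
    moreover have "residue (hh \<Phi>) (xi n) = (-1)^n * gg \<Phi> (xi n) / pi"
      using n M by (intro residue_hh holo) auto
    ultimately show "winding_number (rectpath a1 a3) (xi n) * residue (hh \<Phi>) (xi n) = (-1)^n * gg \<Phi> (xi n) / pi"
      by simp
  qed
  also have "2 * pi * \<i> * \<dots> = 2 * \<i> * (\<Sum>n\<in>{M<..M'}. (-1)^n * gg \<Phi> (xi n))"
    by (simp add: sum_divide_distrib[symmetric])
  finally show ?thesis unfolding a1_def a3_def .
qed


lemma contour_integral_linepath_same_Im':
  assumes "Im z = c" "Im z' = c" "Re z = a" "Re z' = b" "a < b"
  shows   "contour_integral (linepath z z') f = integral {a..b} (\<lambda>x. f (Complex x c))"
proof -
  have zz': "z = Complex a c" "z' = Complex b c"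
    using assms by (auto simp: complex_eq_iff)
  have "contour_integral (linepath z z') f =
         (z' - z) * integral {0..1} (\<lambda>x. f (linepath z z' x))"
    by (simp add: contour_integral_integral)
  also have "z' - z = of_real (b - a)"
    by (simp add: zz' Complex_eq algebra_simps)
  also have "integral {0..1} (\<lambda>x. f (linepath z z' x)) =
             integral {0..1} (\<lambda>x. f (Complex (linepath a b x) c))"
    by (simp add: linepath_def Complex_eq scaleR_conv_of_real algebra_simps zz')
  also have "\<dots> = integral {0..(b - a) / (b - a)} (\<lambda>x. f (Complex (a + (b - a) * x) c))"
    using \<open>a < b\<close> by (simp add: algebra_simps linepath_def)
  also have "{0..(b - a) / (b - a)} = (\<lambda>x. x / (b - a)) ` {0..b - a}"
    using \<open>a < b\<close> by simp
  also have "integral \<dots> (\<lambda>x. f (Complex (a + (b - a) * x) c)) =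
             integral {a-a..b-a} (\<lambda>x. f (Complex (x + a) c)) / of_real (b - a)"
    using \<open>a < b\<close> by (subst integral_stretch_real) (auto simp: scaleR_conv_of_real add_ac)
  also have "\<dots> = integral {a..b} (\<lambda>x. f (Complex x c)) / of_real (b - a)"
    by (subst integral_shift_real_ivl) (rule refl)
  finally show ?thesis
    using \<open>a < b\<close> by simp
qed

lemma rect_split:
  assumes "continuous_on (path_image (rectpath a1 a3)) f"
  shows "contour_integral (rectpath a1 a3) f =
     contour_integral (linepath a1 (Complex (Re a3) (Im a1))) f +
     contour_integral (linepath (Complex (Re a3) (Im a1)) a3) f +
     contour_integral (linepath a3 (Complex (Re a1) (Im a3))) f +
     contour_integral (linepath (Complex (Re a1) (Im a3)) a1) f"
proof -
  define a2 where "a2 = Complex (Re a3) (Im a1)"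
  define a4 where "a4 = Complex (Re a1) (Im a3)"
  have r: "rectpath a1 a3 = linepath a1 a2 +++ linepath a2 a3 +++ linepath a3 a4 +++ linepath a4 a1"
    by (simp add: rectpath_def Let_def a2_def a4_def)
  have pi: "path_image (rectpath a1 a3) = closed_segment a1 a2 \<union> closed_segment a2 a3 \<union> closed_segment a3 a4 \<union> closed_segment a4 a1"
    unfolding r by (simp add: path_image_join Un_assoc)
  have i1: "f contour_integrable_on linepath a1 a2"
    by (rule contour_integrable_continuous_linepath, rule continuous_on_subset[OF assms]) (auto simp: pi)
  have i2: "f contour_integrable_on linepath a2 a3"
    by (rule contour_integrable_continuous_linepath, rule continuous_on_subset[OF assms]) (auto simp: pi)
  have i3: "f contour_integrable_on linepath a3 a4"
    by (rule contour_integrable_continuous_linepath, rule continuous_on_subset[OF assms]) (auto simp: pi)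
  have i4: "f contour_integrable_on linepath a4 a1"
    by (rule contour_integrable_continuous_linepath, rule continuous_on_subset[OF assms]) (auto simp: pi)
  have "contour_integral (rectpath a1 a3) f = contour_integral (linepath a1 a2) f +
     (contour_integral (linepath a2 a3) f + (contour_integral (linepath a3 a4) f + contour_integral (linepath a4 a1) f))"
    unfolding r using i1 i2 i3 i4
    by (simp add: contour_integrable_joinI valid_path_join)
  thus ?thesis unfolding a2_def a4_def by (simp add: add_ac)
qed

lemma cont_gg_line:
  assumes holo: "\<Phi> holomorphic_on right_half_plane" and x: "x > 0"
  shows "continuous_on A (\<lambda>y. gg \<Phi> (Complex x y))"
proof -
  have "continuous_on right_half_plane (gg \<Phi>)"
    using gg_holo[OF holo] by (rule holomorphic_on_imp_continuous_on)
  moreover have "continuous_on A (\<lambda>y. Complex x y)"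
    unfolding Complex_eq by (intro continuous_intros)
  ultimately show ?thesis
    by (rule continuous_on_compose2) (use x in \<open>auto simp: right_half_plane_def\<close>)
qed

lemma cont_gg_hline:
  assumes holo: "\<Phi> holomorphic_on right_half_plane" and a: "a > 0"
  shows "continuous_on {a..b} (\<lambda>x. gg \<Phi> (Complex x y))"
proof -
  have "continuous_on right_half_plane (gg \<Phi>)"
    using gg_holo[OF holo] by (rule holomorphic_on_imp_continuous_on)
  moreover have "continuous_on {a..b} (\<lambda>x. Complex x y)"
    unfolding Complex_eq by (intro continuous_intros)
  ultimately show ?thesis
    by (rule continuous_on_compose2) (use a in \<open>auto simp: right_half_plane_def\<close>)
qed

lemma vert_bound:
  assumes holo: "\<Phi> holomorphic_on right_half_plane" and m: "m \<ge> 1" and T: "T > 0"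
  shows "ennreal (norm (contour_integral (linepath (Complex (real m) (-T)) (Complex (real m) T)) (hh \<Phi>)))
           \<le> 2 * vert_int \<Phi> (real m)"
proof -
  define F where "F y = norm (gg \<Phi> (Complex (real m) y)) * exp (- pi * \<bar>y\<bar>)" for y
  have mpos: "real m > 0" using m by simp
  have CI: "contour_integral (linepath (Complex (real m) (-T)) (Complex (real m) T)) (hh \<Phi>)
      = \<i> * integral {-T..T} (\<lambda>y. hh \<Phi> (Complex (real m) y))"
    by (rule contour_integral_linepath_same_Re) (use T in auto)
  have cnz: "cos (complex_of_real pi * Complex (real m) y) \<noteq> 0" for y
  proof -
    have "0 < exp (pi * \<bar>y\<bar>) / 2" by simp
    also have "\<dots> \<le> norm (cos (complex_of_real pi * Complex (real m) y))" by (rule cos_vert)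
    finally show ?thesis by auto
  qed
  have ch: "continuous_on {-T..T} (\<lambda>y. hh \<Phi> (Complex (real m) y))"
    unfolding hh_def using cnz
    by (intro continuous_intros cont_gg_line[OF holo mpos]) auto
  have cF: "continuous_on {-T..T} F"
    unfolding F_def by (intro continuous_intros cont_gg_line[OF holo mpos])
  have pw: "norm (hh \<Phi> (Complex (real m) y)) \<le> 2 * F y" for y
  proof -
    let ?c = "norm (cos (complex_of_real pi * Complex (real m) y))"
    have c: "exp (pi * \<bar>y\<bar>) / 2 \<le> ?c" by (rule cos_vert)
    have cpos: "?c > 0" using cnz[of y] by simp
    have "norm (hh \<Phi> (Complex (real m) y)) = norm (gg \<Phi> (Complex (real m) y)) / ?c"
      by (simp add: hh_def norm_divide)
    also have "\<dots> \<le> norm (gg \<Phi> (Complex (real m) y)) / (exp (pi * \<bar>y\<bar>) / 2)"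
      by (rule divide_left_mono[OF c]) (use cpos in auto)
    also have "\<dots> = 2 * F y" by (simp add: F_def exp_minus field_simps)
    finally show ?thesis .
  qed
  have "norm (contour_integral (linepath (Complex (real m) (-T)) (Complex (real m) T)) (hh \<Phi>))
       = norm (integral {-T..T} (\<lambda>y. hh \<Phi> (Complex (real m) y)))"
    unfolding CI by (simp add: norm_mult)
  also have "\<dots> \<le> integral {-T..T} (\<lambda>y. 2 * F y)"
    by (rule integral_norm_bound_integral)
       (use ch cF pw in \<open>auto intro!: integrable_continuous_interval continuous_intros\<close>)
  also have "\<dots> = 2 * integral {-T..T} F" by simp
  finally have le1: "norm (contour_integral (linepath (Complex (real m) (-T)) (Complex (real m) T)) (hh \<Phi>))
      \<le> 2 * integral {-T..T} F" .
  have Fnn: "F y \<ge> 0" for y by (simp add: F_def)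
  have Iint: "(F has_integral integral {-T..T} F) {-T..T}"
    using cF by (intro integrable_integral integrable_continuous_interval)
  have eqI: "(\<integral>\<^sup>+ y. ennreal (indicator {-T..T} y * F y) \<partial>lborel) = ennreal (integral {-T..T} F)"
    by (rule nn_integral_has_integral_lebesgue[OF _ Iint]) (simp add: Fnn)
  have "(\<integral>\<^sup>+ y. ennreal (indicator {-T..T} y * F y) \<partial>lborel) \<le> (\<integral>\<^sup>+ y. ennreal (F y) \<partial>lborel)"
    by (intro nn_integral_mono) (auto simp: indicator_def Fnn)
  also have "\<dots> = vert_int \<Phi> (real m)"
    unfolding vert_int_def F_def gg_def by simp
  finally have le2: "ennreal (integral {-T..T} F) \<le> vert_int \<Phi> (real m)" using eqI by simp
  have "ennreal (norm (contour_integral (linepath (Complex (real m) (-T)) (Complex (real m) T)) (hh \<Phi>)))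
        \<le> ennreal (2 * integral {-T..T} F)"
    using le1 by (rule ennreal_leI)
  also have "\<dots> = 2 * ennreal (integral {-T..T} F)"
  proof -
    have "integral {-T..T} F \<ge> 0" by (rule has_integral_nonneg[OF Iint]) (rule Fnn)
    thus ?thesis by (simp add: ennreal_mult)
  qed
  also have "\<dots> \<le> 2 * vert_int \<Phi> (real m)"
    using le2 by (rule mult_left_mono) simp
  finally show ?thesis .
qed


lemma horiz_bound:
  assumes holo: "\<Phi> holomorphic_on right_half_plane" and ab: "0 < a" "a < b" and y: "1 \<le> \<bar>y\<bar>"
  shows "ennreal (norm (contour_integral (linepath (Complex a y) (Complex b y)) (hh \<Phi>)))
           \<le> ennreal (4 * exp (- pi * \<bar>y\<bar>)) * horiz_int \<Phi> a b y"
proof -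
  define G where "G x = norm (gg \<Phi> (Complex x y))" for x
  define c where "c = 4 * exp (- pi * \<bar>y\<bar>)"
  have CI: "contour_integral (linepath (Complex a y) (Complex b y)) (hh \<Phi>)
      = integral {a..b} (\<lambda>x. hh \<Phi> (Complex x y))"
    by (rule contour_integral_linepath_same_Im') (use ab in auto)
  have cnz: "cos (complex_of_real pi * Complex x y) \<noteq> 0" for x
  proof -
    have "0 < exp (pi * \<bar>y\<bar>) / 4" by simp
    also have "\<dots> \<le> norm (cos (complex_of_real pi * Complex x y))" by (rule cos_horiz[OF y])
    finally show ?thesis by auto
  qed
  have ch: "continuous_on {a..b} (\<lambda>x. hh \<Phi> (Complex x y))"
  proof -
    have "continuous_on {a..b} (\<lambda>x. Complex x y)"
      unfolding Complex_eq by (intro continuous_intros)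
    thus ?thesis
      unfolding hh_def using cnz
      by (intro continuous_intros cont_gg_hline[OF holo ab(1)]) auto
  qed
  have cG: "continuous_on {a..b} G"
    unfolding G_def by (intro continuous_intros cont_gg_hline[OF holo ab(1)])
  have pw: "norm (hh \<Phi> (Complex x y)) \<le> c * G x" for x
  proof -
    let ?c = "norm (cos (complex_of_real pi * Complex x y))"
    have cc: "exp (pi * \<bar>y\<bar>) / 4 \<le> ?c" by (rule cos_horiz[OF y])
    have cpos: "?c > 0" using cnz[of x] by simp
    have "norm (hh \<Phi> (Complex x y)) = G x / ?c"
      by (simp add: hh_def norm_divide G_def)
    also have "\<dots> \<le> G x / (exp (pi * \<bar>y\<bar>) / 4)"
      by (rule divide_left_mono[OF cc]) (use cpos in \<open>auto simp: G_def\<close>)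
    also have "\<dots> = c * G x" by (simp add: c_def exp_minus field_simps)
    finally show ?thesis .
  qed
  have "norm (contour_integral (linepath (Complex a y) (Complex b y)) (hh \<Phi>))
       \<le> integral {a..b} (\<lambda>x. c * G x)"
    unfolding CI
    by (rule integral_norm_bound_integral)
       (use ch cG pw in \<open>auto intro!: integrable_continuous_interval continuous_intros\<close>)
  also have "\<dots> = c * integral {a..b} G" by simp
  finally have le1: "norm (contour_integral (linepath (Complex a y) (Complex b y)) (hh \<Phi>))
      \<le> c * integral {a..b} G" .
  have Gnn: "G x \<ge> 0" for x by (simp add: G_def)
  have Iint: "(G has_integral integral {a..b} G) {a..b}"
    using cG by (intro integrable_integral integrable_continuous_interval)
  have Inn: "integral {a..b} G \<ge> 0" by (rule has_integral_nonneg[OF Iint]) (rule Gnn)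
  have eqI: "(\<integral>\<^sup>+ x. ennreal (indicator {a..b} x * G x) \<partial>lborel) = ennreal (integral {a..b} G)"
    by (rule nn_integral_has_integral_lebesgue[OF _ Iint]) (simp add: Gnn)
  have "horiz_int \<Phi> a b y = (\<integral>\<^sup>+ x. ennreal (indicator {a..b} x * G x) \<partial>lborel)"
    unfolding horiz_int_def G_def gg_def
    by (intro nn_integral_cong) (auto simp: indicator_def)
  hence hI: "horiz_int \<Phi> a b y = ennreal (integral {a..b} G)" using eqI by simp
  have "ennreal (norm (contour_integral (linepath (Complex a y) (Complex b y)) (hh \<Phi>)))
        \<le> ennreal (c * integral {a..b} G)"
    using le1 by (rule ennreal_leI)
  also have "\<dots> = ennreal c * horiz_int \<Phi> a b y"
    unfolding hI using Inn by (simp add: ennreal_mult c_def)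
  finally show ?thesis unfolding c_def .
qed

lemma rev_line: "contour_integral (linepath b a) f = - contour_integral (linepath a b) f"
  using contour_integral_reversepath[OF valid_path_linepath[of a b], of f] by simp

lemma rect_ineq:
  assumes holo: "\<Phi> holomorphic_on right_half_plane" and M: "1 \<le> M" "M < M'" and T: "1 \<le> T"
  shows "ennreal (2 * norm (\<Sum>n\<in>{M<..M'}. (-1)^n * gg \<Phi> (xi n)))
     \<le> ennreal (4 * exp (- pi * \<bar>-T\<bar>)) * horiz_int \<Phi> (real M) (real M') (-T) + 2 * vert_int \<Phi> (real M')
       + ennreal (4 * exp (- pi * \<bar>T\<bar>)) * horiz_int \<Phi> (real M) (real M') T + 2 * vert_int \<Phi> (real M)"
proof -
  define a1 where "a1 = Complex (real M) (-T)"
  define a3 where "a3 = Complex (real M') T"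
  have Mr: "real M < real M'" "real M > 0" using M by auto
  have le13: "Re a1 \<le> Re a3" "Im a1 \<le> Im a3" using Mr T by (auto simp: a1_def a3_def)
  have cont: "continuous_on (path_image (rectpath a1 a3)) (hh \<Phi>)"
  proof (rule holomorphic_on_imp_continuous_on, rule hh_holo[OF holo])
    show "path_image (rectpath a1 a3) \<subseteq> right_half_plane"
      using le13 Mr by (auto simp: path_image_rectpath a1_def a3_def right_half_plane_def)
    fix w assume w: "w \<in> path_image (rectpath a1 a3)"
    hence "(Re w = real M \<or> Re w = real M') \<or> (Im w = -T \<or> Im w = T)"
      using le13 by (auto simp: path_image_rectpath a1_def a3_def)
    thus "cos (complex_of_real pi * w) \<noteq> 0"
    proof (elim disjE)
      assume r: "Re w = real M"
      have w': "w = Complex (real M) (Im w)" using r by (simp add: complex_eq_iff)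
      have "0 < exp (pi * \<bar>Im w\<bar>) / 2" by simp
      also have "\<dots> \<le> norm (cos (complex_of_real pi * Complex (real M) (Im w)))" by (rule cos_vert)
      finally show ?thesis by (subst w') auto
    next
      assume r: "Re w = real M'"
      have w': "w = Complex (real M') (Im w)" using r by (simp add: complex_eq_iff)
      have "0 < exp (pi * \<bar>Im w\<bar>) / 2" by simp
      also have "\<dots> \<le> norm (cos (complex_of_real pi * Complex (real M') (Im w)))" by (rule cos_vert)
      finally show ?thesis by (subst w') auto
    next
      assume i: "Im w = -T"
      have w': "w = Complex (Re w) (Im w)" by simp
      have "0 < exp (pi * \<bar>Im w\<bar>) / 4" by simp
      also have "\<dots> \<le> norm (cos (complex_of_real pi * Complex (Re w) (Im w)))"
        by (rule cos_horiz) (use i T in auto)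
      finally show ?thesis by (subst w') auto
    next
      assume i: "Im w = T"
      have w': "w = Complex (Re w) (Im w)" by simp
      have "0 < exp (pi * \<bar>Im w\<bar>) / 4" by simp
      also have "\<dots> \<le> norm (cos (complex_of_real pi * Complex (Re w) (Im w)))"
        by (rule cos_horiz) (use i T in auto)
      finally show ?thesis by (subst w') auto
    qed
  qed
  define c1 where "c1 = contour_integral (linepath (Complex (real M) (-T)) (Complex (real M') (-T))) (hh \<Phi>)"
  define c2 where "c2 = contour_integral (linepath (Complex (real M') (-T)) (Complex (real M') T)) (hh \<Phi>)"
  define c3 where "c3 = contour_integral (linepath (Complex (real M) T) (Complex (real M') T)) (hh \<Phi>)"
  define c4 where "c4 = contour_integral (linepath (Complex (real M) (-T)) (Complex (real M) T)) (hh \<Phi>)"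
  have "contour_integral (rectpath a1 a3) (hh \<Phi>) = c1 + c2 + (- c3) + (- c4)"
    using rect_split[OF cont] unfolding a1_def a3_def c1_def c2_def c3_def c4_def
    by (simp add: rev_line[of "Complex (real M) T" "Complex (real M') T"] rev_line[of "Complex (real M) (-T)" "Complex (real M) T"])
  moreover have "contour_integral (rectpath a1 a3) (hh \<Phi>) = 2 * \<i> * (\<Sum>n\<in>{M<..M'}. (-1)^n * gg \<Phi> (xi n))"
    unfolding a1_def a3_def using T by (intro rect_CI holo M) auto
  ultimately have "c1 + c2 + (- c3) + (- c4) = 2 * \<i> * (\<Sum>n\<in>{M<..M'}. (-1)^n * gg \<Phi> (xi n))" by simp
  hence "2 * norm (\<Sum>n\<in>{M<..M'}. (-1)^n * gg \<Phi> (xi n)) = norm (c1 + c2 + (- c3) + (- c4))"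
    by (simp add: norm_mult)
  also have "\<dots> \<le> norm c1 + norm c2 + norm c3 + norm c4"
  proof -
    have "norm (c1 + c2 + (- c3) + (- c4)) \<le> norm (c1 + c2 + (- c3)) + norm (- c4)" by (rule norm_triangle_ineq)
    moreover have "norm (c1 + c2 + (- c3)) \<le> norm (c1 + c2) + norm (- c3)" by (rule norm_triangle_ineq)
    moreover have "norm (c1 + c2) \<le> norm c1 + norm c2" by (rule norm_triangle_ineq)
    ultimately show ?thesis by simp
  qed
  finally have le: "2 * norm (\<Sum>n\<in>{M<..M'}. (-1)^n * gg \<Phi> (xi n)) \<le> norm c1 + norm c2 + norm c3 + norm c4" .
  have b1: "ennreal (norm c1) \<le> ennreal (4 * exp (- pi * \<bar>-T\<bar>)) * horiz_int \<Phi> (real M) (real M') (-T)"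
    unfolding c1_def by (rule horiz_bound[OF holo]) (use Mr T in auto)
  have b2: "ennreal (norm c2) \<le> 2 * vert_int \<Phi> (real M')"
    unfolding c2_def by (rule vert_bound[OF holo]) (use M T in auto)
  have b3: "ennreal (norm c3) \<le> ennreal (4 * exp (- pi * \<bar>T\<bar>)) * horiz_int \<Phi> (real M) (real M') T"
    unfolding c3_def by (rule horiz_bound[OF holo]) (use Mr T in auto)
  have b4: "ennreal (norm c4) \<le> 2 * vert_int \<Phi> (real M)"
    unfolding c4_def by (rule vert_bound[OF holo]) (use M T in auto)
  have "ennreal (2 * norm (\<Sum>n\<in>{M<..M'}. (-1)^n * gg \<Phi> (xi n))) \<le> ennreal (norm c1 + norm c2 + norm c3 + norm c4)"
    using le by (rule ennreal_leI)
  also have "\<dots> = ennreal (norm c1) + ennreal (norm c2) + ennreal (norm c3) + ennreal (norm c4)"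
    by (simp add: ennreal_plus)
  also have "\<dots> \<le> ennreal (4 * exp (- pi * \<bar>-T\<bar>)) * horiz_int \<Phi> (real M) (real M') (-T) + 2 * vert_int \<Phi> (real M')
       + ennreal (4 * exp (- pi * \<bar>T\<bar>)) * horiz_int \<Phi> (real M) (real M') T + 2 * vert_int \<Phi> (real M)"
    by (intro add_mono b1 b2 b3 b4)
  finally show ?thesis .
qed


lemma cauchy_bound:
  assumes holo: "\<Phi> holomorphic_on right_half_plane" and M: "1 \<le> M" "M < M'"
    and ha: "((\<lambda>y. ennreal (exp (- pi * \<bar>y\<bar>)) * horiz_int \<Phi> (real M) (real M') y) \<longlongrightarrow> 0) at_top"
    and hb: "((\<lambda>y. ennreal (exp (- pi * \<bar>y\<bar>)) * horiz_int \<Phi> (real M) (real M') y) \<longlongrightarrow> 0) at_bot"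
  shows "ennreal (2 * norm (\<Sum>n\<in>{M<..M'}. (-1)^n * gg \<Phi> (xi n)))
          \<le> 2 * vert_int \<Phi> (real M') + 2 * vert_int \<Phi> (real M)"
proof -
  define H where "H y = ennreal (exp (- pi * \<bar>y\<bar>)) * horiz_int \<Phi> (real M) (real M') y" for y
  have eq: "ennreal (4 * exp (- pi * \<bar>y\<bar>)) * horiz_int \<Phi> (real M) (real M') y = 4 * H y" for y
    unfolding H_def by (simp add: ennreal_mult mult.assoc)
  have l1: "((\<lambda>T. H (-T)) \<longlongrightarrow> 0) at_top"
    using hb unfolding H_def filterlim_at_bot_mirror by simp
  have l2: "(H \<longlongrightarrow> 0) at_top" using ha unfolding H_def by simp
  have lim: "((\<lambda>T. 4 * H (-T) + 2 * vert_int \<Phi> (real M') + 4 * H T + 2 * vert_int \<Phi> (real M))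
      \<longlongrightarrow> 4 * 0 + 2 * vert_int \<Phi> (real M') + 4 * 0 + 2 * vert_int \<Phi> (real M)) at_top"
    by (intro tendsto_add tendsto_const ennreal_tendsto_cmult l1 l2) auto
  have ev: "eventually (\<lambda>T. ennreal (2 * norm (\<Sum>n\<in>{M<..M'}. (-1)^n * gg \<Phi> (xi n)))
      \<le> 4 * H (-T) + 2 * vert_int \<Phi> (real M') + 4 * H T + 2 * vert_int \<Phi> (real M)) at_top"
    using eventually_ge_at_top[of "1::real"]
  proof (rule eventually_mono)
    fix T :: real assume "1 \<le> T"
    thus "ennreal (2 * norm (\<Sum>n\<in>{M<..M'}. (-1)^n * gg \<Phi> (xi n)))
      \<le> 4 * H (-T) + 2 * vert_int \<Phi> (real M') + 4 * H T + 2 * vert_int \<Phi> (real M)"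
      using rect_ineq[OF holo M, of T] unfolding eq by simp
  qed
  have "ennreal (2 * norm (\<Sum>n\<in>{M<..M'}. (-1)^n * gg \<Phi> (xi n)))
        \<le> 4 * 0 + 2 * vert_int \<Phi> (real M') + 4 * 0 + 2 * vert_int \<Phi> (real M)"
    by (rule tendsto_le[OF _ lim tendsto_const ev]) simp
  thus ?thesis by simp
qed


lemma ennreal_quarter: "e \<ge> 0 \<Longrightarrow> 2 * ennreal (e/4) + 2 * ennreal (e/4) = ennreal e"
proof -
  assume e: "e \<ge> 0"
  have "ennreal (e/2) = ennreal (2 * (e/4))" by simp
  also have "\<dots> = ennreal 2 * ennreal (e/4)" by (rule ennreal_mult) (use e in auto)
  finally have "2 * ennreal (e/4) = ennreal (e/2)" by simp
  moreover have "ennreal (e/2) + ennreal (e/2) = ennreal e"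
    using e by (simp add: ennreal_plus[symmetric])
  ultimately show ?thesis by simp
qed

lemma summable_b:
  assumes holo: "\<Phi> holomorphic_on right_half_plane"
    and cond_a: "\<And>a b. 0 < a \<Longrightarrow> a < b \<Longrightarrow>
        ((\<lambda>y. ennreal (exp (- pi * \<bar>y\<bar>)) * horiz_int \<Phi> a b y) \<longlongrightarrow> 0) at_top \<and>
        ((\<lambda>y. ennreal (exp (- pi * \<bar>y\<bar>)) * horiz_int \<Phi> a b y) \<longlongrightarrow> 0) at_bot"
    and cond_c: "(vert_int \<Phi> \<longlongrightarrow> 0) at_top"
  shows "summable (\<lambda>k. (-1)^(Suc k) * gg \<Phi> (xi (Suc k)))"
  unfolding summable_Cauchy
proof (intro allI impI)
  fix e :: real assume e: "e > 0"
  have "0 < ennreal (e/4)" using e by simp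
  from order_tendstoD(2)[OF cond_c this]
  obtain X where X: "\<And>x. x \<ge> X \<Longrightarrow> vert_int \<Phi> x < ennreal (e/4)"
    unfolding eventually_at_top_linorder by blast
  define N where "N = max 1 (nat \<lceil>X\<rceil>)"
  show "\<exists>N. \<forall>m\<ge>N. \<forall>n. norm (\<Sum>k\<in>{m..<n}. (-1)^(Suc k) * gg \<Phi> (xi (Suc k))) < e"
  proof (intro exI allI impI)
    fix m n assume mN: "N \<le> m"
    show "norm (\<Sum>k\<in>{m..<n}. (-1)^(Suc k) * gg \<Phi> (xi (Suc k))) < e"
    proof (cases "n \<le> m")
      case True thus ?thesis using e by simp
    next
      case False
      hence mn: "m < n" by simp
      have m1: "1 \<le> m" using mN by (simp add: N_def)
      have c1: "X \<le> real (nat \<lceil>X\<rceil>)" by (rule real_nat_ceiling_ge)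
      have "nat \<lceil>X\<rceil> \<le> m" using mN by (simp add: N_def)
      hence "real (nat \<lceil>X\<rceil>) \<le> real m" by (simp only: of_nat_le_iff)
      hence "real m \<ge> X" using c1 by linarith
      hence vm: "vert_int \<Phi> (real m) < ennreal (e/4)" by (rule X)
      have "real m \<le> real n" using mn by simp
      hence "real n \<ge> X" using \<open>real m \<ge> X\<close> by linarith
      hence vn: "vert_int \<Phi> (real n) < ennreal (e/4)" by (rule X)
      have reidx: "(\<Sum>k\<in>{m..<n}. (-1)^(Suc k) * gg \<Phi> (xi (Suc k))) = (\<Sum>j\<in>{m<..n}. (-1)^j * gg \<Phi> (xi j))"
      proof -
        have "{m<..n} = Suc ` {m..<n}" by (auto simp: image_Suc_atLeastLessThan)
        hence "(\<Sum>j\<in>{m<..n}. (-1)^j * gg \<Phi> (xi j)) = (\<Sum>j\<in>Suc ` {m..<n}. (-1)^j * gg \<Phi> (xi j))"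
          by (simp only:)
        also have "\<dots> = (\<Sum>k\<in>{m..<n}. (-1)^(Suc k) * gg \<Phi> (xi (Suc k)))"
          by (rule sum.reindex[unfolded comp_def]) simp
        finally show ?thesis by (rule sym)
      qed
      have ca: "((\<lambda>y. ennreal (exp (- pi * \<bar>y\<bar>)) * horiz_int \<Phi> (real m) (real n) y) \<longlongrightarrow> 0) at_top \<and>
        ((\<lambda>y. ennreal (exp (- pi * \<bar>y\<bar>)) * horiz_int \<Phi> (real m) (real n) y) \<longlongrightarrow> 0) at_bot"
        using m1 mn by (intro cond_a) auto
      have "ennreal (2 * norm (\<Sum>j\<in>{m<..n}. (-1)^j * gg \<Phi> (xi j)))
          \<le> 2 * vert_int \<Phi> (real n) + 2 * vert_int \<Phi> (real m)"
        using ca by (intro cauchy_bound holo m1 mn) auto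
      also have "\<dots> \<le> 2 * ennreal (e/4) + 2 * ennreal (e/4)"
        using vm vn by (intro add_mono mult_left_mono) auto
      also have "\<dots> = ennreal e" using e by (intro ennreal_quarter) auto
      finally have "2 * norm (\<Sum>j\<in>{m<..n}. (-1)^j * gg \<Phi> (xi j)) \<le> e"
        using e by (simp add: ennreal_le_iff)
      thus ?thesis unfolding reidx using e by simp
    qed
  qed
qed


definition PP :: "complex \<Rightarrow> complex \<Rightarrow> complex" where
  "PP c z = (if z = c then deriv (\<lambda>w. cos (complex_of_real pi * w)) c
             else (cos (complex_of_real pi * z) - cos (complex_of_real pi * c)) / (z - c))"

definition tt :: "(complex \<Rightarrow> complex) \<Rightarrow> nat \<Rightarrow> complex \<Rightarrow> complex" where
  "tt \<Phi> n z = (-1)^n * \<Phi> (xi n) / complex_of_real pi * (PP (xi n) z - PP (- xi n) z)"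

definition FF :: "(complex \<Rightarrow> complex) \<Rightarrow> nat \<Rightarrow> complex \<Rightarrow> complex" where
  "FF \<Phi> N z = (\<Sum>n = 1..N. tt \<Phi> n z)"

definition rr :: "(complex \<Rightarrow> complex) \<Rightarrow> nat \<Rightarrow> complex \<Rightarrow> complex" where
  "rr \<Phi> n z = tt \<Phi> n z + 2 * cos (complex_of_real pi * z) / complex_of_real pi * ((-1)^n * gg \<Phi> (xi n))"

lemma PP_holo: "PP c holomorphic_on UNIV"
proof -
  have "(\<lambda>w. cos (complex_of_real pi * w)) holomorphic_on UNIV" by (intro holomorphic_intros)
  from pole_lemma_open[OF this open_UNIV, of c] show ?thesis
    unfolding PP_def by simp
qed

lemma FF_holo: "FF \<Phi> N holomorphic_on UNIV"
  unfolding FF_def tt_def by (intro holomorphic_intros PP_holo)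

lemma PP_eq: "cos (complex_of_real pi * c) = 0 \<Longrightarrow> z \<noteq> c \<Longrightarrow> PP c z = cos (complex_of_real pi * z) / (z - c)"
  unfolding PP_def by simp

lemma z_ne_xi:
  assumes "cos (complex_of_real pi * z) \<noteq> 0"
  shows "z \<noteq> xi n" "z \<noteq> - xi n"
  using assms cos_xi[of n] cos_mxi[of n] by auto

lemma xi_nz: "n \<ge> 1 \<Longrightarrow> xi n \<noteq> 0"
proof -
  assume "n \<ge> 1"
  hence "real n \<ge> 1" by simp
  thus ?thesis unfolding xi_def of_real_eq_0_iff by linarith
qed

lemma FF_agree:
  assumes "cos (complex_of_real pi * z) \<noteq> 0"
  shows "FF \<Phi> N z = partial_K \<Phi> N z"
proof -
  have "tt \<Phi> n z = cos (complex_of_real pi * z) / complex_of_real pi * ((-1)^n * calA (real n - 1/2) \<Phi> z)"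
    for n
  proof -
    have a: "z - xi n \<noteq> 0" "z + xi n \<noteq> 0" using z_ne_xi[OF assms, of n] by (auto simp: add_eq_0_iff)
    have p1: "PP (xi n) z = cos (complex_of_real pi * z) / (z - xi n)"
      by (rule PP_eq[OF cos_xi]) (use z_ne_xi[OF assms] in auto)
    have p2: "PP (- xi n) z = cos (complex_of_real pi * z) / (z + xi n)"
      using PP_eq[OF cos_mxi, of z n] z_ne_xi[OF assms] by auto
    have c: "calA (real n - 1/2) \<Phi> z = \<Phi> (xi n) / (z - xi n) - \<Phi> (xi n) / (z + xi n)"
      unfolding calA_def xi_def by simp
    show ?thesis unfolding tt_def p1 p2 c using a by (simp add: field_simps)
  qed
  thus ?thesis unfolding FF_def partial_K_def by (simp add: sum_distrib_left)
qed

lemma rr_eq: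
  assumes n: "n \<ge> 1" and z: "z \<noteq> xi n" "z \<noteq> - xi n"
  shows "rr \<Phi> n z = (-1)^n * gg \<Phi> (xi n) / complex_of_real pi * cos (complex_of_real pi * z)
                      * (2 * z^2 / (z^2 - (xi n)^2))"
proof -
  have a: "z - xi n \<noteq> 0" "z + xi n \<noteq> 0" using z by (auto simp: add_eq_0_iff)
  have d: "z^2 - (xi n)^2 \<noteq> 0"
  proof
    assume "z^2 - (xi n)^2 = 0"
    hence "(z - xi n) * (z + xi n) = 0" by (simp add: power2_eq_square algebra_simps)
    thus False using a by simp
  qed
  have p1: "PP (xi n) z = cos (complex_of_real pi * z) / (z - xi n)"
    by (rule PP_eq[OF cos_xi]) (use z in auto)
  have p2: "PP (- xi n) z = cos (complex_of_real pi * z) / (z + xi n)"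
    using PP_eq[OF cos_mxi, of z n] z by auto
  have phi: "\<Phi> (xi n) = xi n * gg \<Phi> (xi n)" unfolding gg_def using xi_nz[OF n] by simp
  have sq: "z^2 - (xi n)^2 = (z - xi n) * (z + xi n)" by (simp add: power2_eq_square algebra_simps)
  define Q where "Q = (-1)^n * gg \<Phi> (xi n) / complex_of_real pi * cos (complex_of_real pi * z)"
  have e1: "rr \<Phi> n z = Q * (xi n * (1/(z - xi n) - 1/(z + xi n)) + 2)"
    unfolding rr_def tt_def p1 p2 phi Q_def by (simp add: divide_inverse algebra_simps)
  have key: "xi n * (1/(z - xi n) - 1/(z + xi n)) + 2 = 2*z^2/((z - xi n)*(z + xi n))"
  proof -
    have d2: "z*z - xi n * xi n \<noteq> 0" using d by (simp add: power2_eq_square)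
    show ?thesis using a d2 by (simp add: field_simps power2_eq_square)
  qed
  show ?thesis unfolding e1 key sq Q_def by simp
qed


lemma rr_bound:
  assumes n: "n \<ge> 1" and gB: "norm (gg \<Phi> (xi n)) \<le> B" and cC: "norm (cos (complex_of_real pi * z)) \<le> C"
    and zR: "norm z \<le> R" and big: "2 * R \<le> real n - 1/2"
  shows "norm (rr \<Phi> n z) \<le> B / pi * C * (16 * R^2 / (real n)^2)"
proof -
  define x where "x = real n - 1/2"
  have xpos: "x > 0" using n by (simp add: x_def)
  have xin: "xi n = complex_of_real x" by (simp add: xi_def x_def)
  have Rnn: "R \<ge> 0" using zR norm_ge_zero order_trans by blast
  have Rx: "R \<le> x / 2" using big by (simp add: x_def)
  have nz: "norm z < x" using zR Rx xpos by linarith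
  have z1: "z \<noteq> xi n" using nz xin by (auto simp: norm_of_real)
  have z2: "z \<noteq> - xi n" using nz xin by (auto simp: norm_of_real)
  define D where "D = norm (z^2 - (xi n)^2)"
  have "norm ((xi n)^2) - norm (z^2) \<le> norm ((xi n)^2 - z^2)" by (rule norm_triangle_ineq2)
  hence "x^2 - (norm z)^2 \<le> D" unfolding D_def xin
    by (simp add: norm_power norm_minus_commute abs_of_pos xpos flip: of_real_power)
  moreover have "(norm z)^2 \<le> R^2" using zR by (intro power_mono) auto
  moreover have "R^2 \<le> (x/2)^2" using Rx Rnn by (intro power_mono) auto
  hence "R^2 \<le> x^2/4" by (simp add: power_divide)
  ultimately have Dge: "x^2 / 2 \<le> D" using zero_le_power2[of x] by linarith
  have Dpos: "D > 0" using Dge xpos by (smt (verit) zero_less_power divide_pos_pos)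
  have "2 * (norm z)^2 / D \<le> 2 * R^2 / (x^2/2)"
    by (rule frac_le) (use zR Dge xpos Rnn in \<open>auto intro!: power_mono\<close>)
  also have "\<dots> = 4 * R^2 / x^2" by simp
  also have "\<dots> \<le> 16 * R^2 / (real n)^2"
  proof -
    have "real n / 2 \<le> x" using n by (simp add: x_def)
    hence "(real n / 2)^2 \<le> x^2" using n by (intro power_mono) auto
    hence "(real n)^2 \<le> 4 * x^2" by (simp add: power_divide)
    moreover have "(real n)^2 > 0" using n by simp
    ultimately have "4 / x^2 \<le> 16 / (real n)^2" using xpos
      by (simp add: divide_simps)
    hence "R^2 * (4 / x^2) \<le> R^2 * (16 / (real n)^2)" by (rule mult_left_mono) simp
    thus ?thesis by (simp add: mult.commute)
  qed
  finally have q: "2 * (norm z)^2 / D \<le> 16 * R^2 / (real n)^2" .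
  have "norm (rr \<Phi> n z) = norm (gg \<Phi> (xi n)) / pi * norm (cos (complex_of_real pi * z)) * (2 * (norm z)^2 / D)"
    unfolding rr_eq[OF n z1 z2] D_def by (simp add: norm_mult norm_divide norm_power)
  also have "\<dots> \<le> B / pi * C * (16 * R^2 / (real n)^2)"
  proof (intro mult_mono q divide_right_mono gB cC)
    show "0 \<le> B / pi * C" using gB cC norm_ge_zero by (smt (verit) divide_nonneg_pos mult_nonneg_nonneg pi_gt_zero)
  next
    have "0 \<le> B" using gB norm_ge_zero[of "gg \<Phi> (xi n)"] by linarith
    thus "0 \<le> B / pi" by simp
  qed (auto simp: D_def)
  finally show ?thesis .
qed


lemma unif_const_seq:
  assumes "(X \<longlongrightarrow> l) F"
  shows "uniform_limit S (\<lambda>n z. X n) (\<lambda>z. l) F"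
  using assms unfolding uniform_limit_iff tendsto_iff by simp

lemma FF_decomp:
  "FF \<Phi> N z = (\<Sum>k<N. rr \<Phi> (Suc k) z)
     - 2 * cos (complex_of_real pi * z) / complex_of_real pi * (\<Sum>k<N. (-1)^(Suc k) * gg \<Phi> (xi (Suc k)))"
proof -
  have "(\<Sum>k<N. rr \<Phi> (Suc k) z) = (\<Sum>k<N. tt \<Phi> (Suc k) z)
     + 2 * cos (complex_of_real pi * z) / complex_of_real pi * (\<Sum>k<N. (-1)^(Suc k) * gg \<Phi> (xi (Suc k)))"
    unfolding rr_def by (simp only: sum.distrib sum_distrib_left)
  moreover have "FF \<Phi> N z = (\<Sum>k<N. tt \<Phi> (Suc k) z)"
    unfolding FF_def using sum.atLeast1_atMost_eq[of "\<lambda>n. tt \<Phi> n z" N] by simp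
  ultimately show ?thesis by simp
qed

lemma unif_main:
  assumes holo: "\<Phi> holomorphic_on right_half_plane"
    and cond_a: "\<And>a b. 0 < a \<Longrightarrow> a < b \<Longrightarrow>
        ((\<lambda>y. ennreal (exp (- pi * \<bar>y\<bar>)) * horiz_int \<Phi> a b y) \<longlongrightarrow> 0) at_top \<and>
        ((\<lambda>y. ennreal (exp (- pi * \<bar>y\<bar>)) * horiz_int \<Phi> a b y) \<longlongrightarrow> 0) at_bot"
    and cond_c: "(vert_int \<Phi> \<longlongrightarrow> 0) at_top"
    and S: "compact S"
  shows "uniform_limit S (FF \<Phi>) (\<lambda>z. (\<Sum>k. rr \<Phi> (Suc k) z)
     - 2 * cos (complex_of_real pi * z) / complex_of_real pi * (\<Sum>k. (-1)^(Suc k) * gg \<Phi> (xi (Suc k)))) sequentially"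
proof -
  define b where "b k = (-1)^(Suc k) * gg \<Phi> (xi (Suc k))" for k
  have sb: "summable b" unfolding b_def by (rule summable_b[OF holo cond_a cond_c])
  have "convergent b" using summable_LIMSEQ_zero[OF sb] by (auto simp: convergent_def)
  hence "Bseq b" by (rule convergent_imp_Bseq)
  then obtain B where B: "B > 0" "\<And>k. norm (b k) \<le> B" by (auto elim: BseqE)
  have gB: "norm (gg \<Phi> (xi n)) \<le> B" if n1: "n \<ge> 1" for n
  proof -
    obtain k where "n = Suc k" using n1 by (cases n) auto
    thus ?thesis using B(2)[of k] by (simp add: b_def norm_mult norm_power)
  qed
  have "bounded S" using S by (rule compact_imp_bounded)
  then obtain R0 where R0: "\<And>z. z \<in> S \<Longrightarrow> norm z \<le> R0" by (auto simp: bounded_iff)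
  define R where "R = max R0 1"
  have zR: "norm z \<le> R" if "z \<in> S" for z using R0[OF that] by (simp add: R_def)
  have R1: "R \<ge> 1" by (simp add: R_def)
  have ccos: "continuous_on S (\<lambda>z. 2 * cos (complex_of_real pi * z) / complex_of_real pi)"
    by (intro continuous_intros) auto
  have bcos: "bounded ((\<lambda>z. 2 * cos (complex_of_real pi * z) / complex_of_real pi) ` S)"
    by (intro compact_imp_bounded compact_continuous_image ccos S)
  have ccos1: "continuous_on S (\<lambda>z. cos (complex_of_real pi * z))"
    by (intro continuous_intros)
  have "bounded ((\<lambda>z. cos (complex_of_real pi * z)) ` S)"
    by (intro compact_imp_bounded compact_continuous_image ccos1 S)
  then obtain C where C: "\<And>z. z \<in> S \<Longrightarrow> norm (cos (complex_of_real pi * z)) \<le> C"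
    by (auto simp: bounded_iff)
  define K0 where "K0 = B / pi * C * (16 * R^2)"
  have s2: "summable (\<lambda>k. inverse (real (Suc k) ^ 2))"
    using inverse_power_summable[of 2, where 'a=real] by (subst summable_Suc_iff) simp
  have sM: "summable (\<lambda>k. K0 * inverse (real (Suc k) ^ 2))"
    by (rule summable_mult[OF s2])
  have ev: "\<forall>\<^sub>F k in sequentially. \<forall>z\<in>S. norm (rr \<Phi> (Suc k) z) \<le> K0 * inverse (real (Suc k) ^ 2)"
    unfolding eventually_sequentially
  proof (intro exI allI impI ballI)
    fix k z assume k: "nat \<lceil>2 * R\<rceil> \<le> k" and z: "z \<in> S"
    have "2 * R \<le> real (nat \<lceil>2 * R\<rceil>)" by (rule real_nat_ceiling_ge)
    also have "\<dots> \<le> real k" using k by (simp only: of_nat_le_iff)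
    finally have big: "2 * R \<le> real (Suc k) - 1/2" by simp
    have "norm (rr \<Phi> (Suc k) z) \<le> B / pi * C * (16 * R^2 / (real (Suc k))^2)"
      by (rule rr_bound[OF _ gB C[OF z] zR[OF z] big]) auto
    also have "\<dots> = K0 * inverse (real (Suc k) ^ 2)"
      by (simp add: K0_def divide_inverse)
    finally show "norm (rr \<Phi> (Suc k) z) \<le> K0 * inverse (real (Suc k) ^ 2)" .
  qed
  have U1: "uniform_limit S (\<lambda>N z. \<Sum>k<N. rr \<Phi> (Suc k) z) (\<lambda>z. \<Sum>k. rr \<Phi> (Suc k) z) sequentially"
    by (rule Weierstrass_m_test_ev[OF ev sM])
  have U2: "uniform_limit S (\<lambda>N z. 2 * cos (complex_of_real pi * z) / complex_of_real pi * (\<Sum>k<N. b k))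
       (\<lambda>z. 2 * cos (complex_of_real pi * z) / complex_of_real pi * suminf b) sequentially"
  proof (rule uniform_lim_mult[OF uniform_limit_const unif_const_seq[OF summable_LIMSEQ[OF sb]] bcos])
    show "bounded ((\<lambda>z. suminf b) ` S)"
      by (rule finite_imp_bounded, rule finite_subset[of _ "{suminf b}"]) auto
  qed
  have U: "uniform_limit S (\<lambda>N z. (\<Sum>k<N. rr \<Phi> (Suc k) z) - 2 * cos (complex_of_real pi * z) / complex_of_real pi * (\<Sum>k<N. b k))
       (\<lambda>z. (\<Sum>k. rr \<Phi> (Suc k) z) - 2 * cos (complex_of_real pi * z) / complex_of_real pi * suminf b) sequentially"
    by (rule uniform_limit_minus[OF U1 U2])
  have FFe: "FF \<Phi> = (\<lambda>N z. (\<Sum>k<N. rr \<Phi> (Suc k) z) - 2 * cos (complex_of_real pi * z) / complex_of_real pi * (\<Sum>k<N. b k))"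
    by (intro ext) (simp only: FF_decomp b_def)
  show ?thesis using U unfolding FFe b_def .
qed

theorem lemma3p3:
  fixes \<Phi> :: "complex \<Rightarrow> complex"
  assumes holo: "\<Phi> holomorphic_on right_half_plane"
    and cond_a: "\<And>a b. 0 < a \<Longrightarrow> a < b \<Longrightarrow>
        ((\<lambda>y. ennreal (exp (- pi * \<bar>y\<bar>)) * horiz_int \<Phi> a b y) \<longlongrightarrow> 0) at_top \<and>
        ((\<lambda>y. ennreal (exp (- pi * \<bar>y\<bar>)) * horiz_int \<Phi> a b y) \<longlongrightarrow> 0) at_bot"
    and cond_b: "\<And>\<eta>. 0 < \<eta> \<Longrightarrow> (SUP x\<in>{\<eta>..}. vert_int \<Phi> x) < \<infinity>"
    and cond_c: "(vert_int \<Phi> \<longlongrightarrow> 0) at_top"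
  shows "\<exists>F K. (\<forall>N. F N holomorphic_on UNIV \<and>
                    (\<forall>z. cos (complex_of_real pi * z) \<noteq> 0 \<longrightarrow> F N z = partial_K \<Phi> N z))
             \<and> K holomorphic_on UNIV
             \<and> (\<forall>S. compact S \<longrightarrow> uniform_limit S F K sequentially)"
proof -
  define K where "K = (\<lambda>z. (\<Sum>k. rr \<Phi> (Suc k) z)
     - 2 * cos (complex_of_real pi * z) / complex_of_real pi * (\<Sum>k. (-1)^(Suc k) * gg \<Phi> (xi (Suc k))))"
  have U: "uniform_limit S (FF \<Phi>) K sequentially" if "compact S" for S
    unfolding K_def by (rule unif_main[OF holo cond_a cond_c that])
  have "K holomorphic_on UNIV"
  proof (rule holomorphic_uniform_sequence[OF open_UNIV FF_holo])
    fix x :: complex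
    show "\<exists>d>0. cball x d \<subseteq> UNIV \<and> uniform_limit (cball x d) (FF \<Phi>) K sequentially"
      by (intro exI[of _ 1] conjI U compact_cball) auto
  qed
  thus ?thesis using FF_holo FF_agree U by blast
qed

end
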